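(* Let $n\ge2$, let $\mathcal{P}$ be a probability distribution on $\mathcal{Z}=\mathcal{X}\times\mathcal{Y}$, let $h:\mathcal{Z}^{n-1}\times\mathcal{X}\to\mathcal{R}$ be a possibly stochastic prediction function, and let $\ell:\mathcal{R}\times\mathcal{Y}\to[0,1]$ be a (measurable) loss. Then \[ \mathrm{gen}(h)\le\frac{c_n}{\sqrt2}\,\mathbb{E}_{z^n\sim\mathcal{P}^n}\sqrt{\mathrm{floo\text{-}CMI}(h,z^n)},\qquad c_n=\frac{n}{n-1}. \]
   Context: $h(z,x)$ is the (possibly random) prediction on input $x$ after training on $z$; its randomness is independent of the data and of $U$ below. For a training set $z^{m}=((x_1,y_1),\dots,(x_m,y_m))$, the true loss is $\mathcal{L}(h,z^m)=\mathbb{E}_{(x',y')\sim\mathcal{P}}[\ell(h(z^m,x'),y')]$ and the empirical loss is $\widehat{\mathcal{L}}(h,z^m)=\frac1m\sum_{i=1}^m\ell(h(z^m,x_i),y_i)$. The generalization gap is $\mathrm{gen}(h)=\big|\mathbb{E}\big[\widehat{\mathcal{L}}(h,Z^{n-1})-\mathcal{L}(h,Z^{n-1})\big]\big|$ with $Z^{n-1}\sim\mathcal{P}^{n-1}$ (expectation also over the randomness of $h$). For $z^n\in\mathcal{Z}^n$ with $z_i=(x_i,y_i)$, let $x^n=(x_1,\dots,x_n)$, let $z^{n-1}_{-u}$ be $z^n$ with $z_u$ deleted, and let $h(z^{n-1}_{-u},x^n)=(h(z^{n-1}_{-u},x_1),\dots,h(z^{n-1}_{-u},x_n))$. With $U$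 uniform on $[n]$, $\mathrm{floo\text{-}CMI}(h,z^n)=I\big(h(z^{n-1}_{-U},x^n);U\mid Z^n=z^n\big)$. *)

theory Defs
  imports "HOL-Probability.Probability"
begin

text \<open>A training set of size m is an (extensional) function on {..<m}
  with values in Z = X \<times> Y. The possibly stochastic predictor is
  h w z x, where the internal randomness w is drawn from a probability
  measure MW independent of everything else.\<close>

definition del_idx :: "nat \<Rightarrow> nat \<Rightarrow> (nat \<Rightarrow> 'z) \<Rightarrow> nat \<Rightarrow> 'z" where
  "del_idx n u z = (\<lambda>i. if i < n - 1 then z (if i < u then i else Suc i) else undefined)"

text \<open>floo-CMI(h, z^n) = I(h(z^{n-1}_{-U}, x^n); U | Z^n = z^n), in nats,
  on the probability space MW \<times> Uniform{..<n}.\<close>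
definition floo_CMI ::
  "'w measure \<Rightarrow> 'r measure \<Rightarrow> ('w \<Rightarrow> (nat \<Rightarrow> 'x \<times> 'y) \<Rightarrow> 'x \<Rightarrow> 'r) \<Rightarrow> nat
     \<Rightarrow> (nat \<Rightarrow> 'x \<times> 'y) \<Rightarrow> real" where
  "floo_CMI MW MR h n z =
     prob_space.mutual_information (MW \<Otimes>\<^sub>M uniform_count_measure {..<n}) (exp 1)
       (PiM {..<n} (\<lambda>_. MR)) (count_space {..<n})
       (\<lambda>(w, u). \<lambda>i\<in>{..<n}. h w (del_idx n u z) (fst (z i))) snd"

definition emp_loss ::
  "('r \<Rightarrow> 'y \<Rightarrow> real) \<Rightarrow> ('w \<Rightarrow> (nat \<Rightarrow> 'x \<times> 'y) \<Rightarrow> 'x \<Rightarrow> 'r) \<Rightarrow> nat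
     \<Rightarrow> 'w \<Rightarrow> (nat \<Rightarrow> 'x \<times> 'y) \<Rightarrow> real" where
  "emp_loss loss h m w z = (\<Sum>i<m. loss (h w z (fst (z i))) (snd (z i))) / real m"

definition true_loss ::
  "('x \<times> 'y) measure \<Rightarrow> ('r \<Rightarrow> 'y \<Rightarrow> real) \<Rightarrow> ('w \<Rightarrow> (nat \<Rightarrow> 'x \<times> 'y) \<Rightarrow> 'x \<Rightarrow> 'r)
     \<Rightarrow> 'w \<Rightarrow> (nat \<Rightarrow> 'x \<times> 'y) \<Rightarrow> real" where
  "true_loss P loss h w z = (\<integral>p. loss (h w z (fst p)) (snd p) \<partial>P)"

definition gen_gap ::
  "'w measure \<Rightarrow> ('x \<times> 'y) measure \<Rightarrow> ('r \<Rightarrow> 'y \<Rightarrow> real)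
     \<Rightarrow> ('w \<Rightarrow> (nat \<Rightarrow> 'x \<times> 'y) \<Rightarrow> 'x \<Rightarrow> 'r) \<Rightarrow> nat \<Rightarrow> real" where
  "gen_gap MW P loss h m =
     \<bar>\<integral>(w, z). emp_loss loss h m w z - true_loss P loss h w z \<partial>(MW \<Otimes>\<^sub>M PiM {..<m} (\<lambda>_. P))\<bar>"

end

theory Submission
  imports Defs "HOL-Probability.Probability"
begin


lemma xlnx_ineq:
  fixes t s :: real assumes "0 \<le> t" "0 < s"
  shows "t * ln s + t - s \<le> t * ln t"
proof (cases "t = 0")
  case True then show ?thesis using assms by simp
next
  case False
  then have t: "t > 0" using assms by simp
  have "ln (s / t) \<le> s / t - 1" using t assms by (intro ln_le_minus_one) auto
  then have "t * ln (s/t) \<le> t * (s/t - 1)" using t by (intro mult_left_mono) auto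
  also have "\<dots> = s - t" using t by (simp add: field_simps)
  finally show ?thesis using t assms by (simp add: ln_div algebra_simps)
qed

lemma DV_ineq:
  fixes M :: "'a measure" and f G :: "'a \<Rightarrow> real"
  assumes PM: "prob_space M"
    and fm[measurable]: "f \<in> borel_measurable M" and Gm[measurable]: "G \<in> borel_measurable M"
    and fb: "\<And>x. x \<in> space M \<Longrightarrow> 0 \<le> f x \<and> f x \<le> B"
    and Gb: "\<And>x. x \<in> space M \<Longrightarrow> \<bar>G x\<bar> \<le> C"
    and f1: "(\<integral>x. f x \<partial>M) = 1"
  shows "(\<integral>x. f x * G x \<partial>M) - ln (\<integral>x. exp (G x) \<partial>M) \<le> (\<integral>x. f x * ln (f x) \<partial>M)"
proof -
  interpret prob_space M by fact
  define Z where "Z = (\<integral>x. exp (G x) \<partial>M)"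
  have iexp: "integrable M (\<lambda>x. exp (G x))"
    by (rule integrable_const_bound[where B="exp C"]) (auto intro!: AE_I2 dest!: Gb)
  have "(\<integral>x. exp (- C) \<partial>M) \<le> Z" unfolding Z_def
    by (intro integral_mono iexp) (auto dest!: Gb)
  moreover have "(\<integral>x. exp (- C) \<partial>M) = exp (- C)" using prob_space by simp
  ultimately have Zpos: "Z > 0" by (smt (verit) exp_gt_zero)
  have ifG: "integrable M (\<lambda>x. f x * G x)"
    by (rule integrable_const_bound[where B="\<bar>B\<bar> * C"]) (auto intro!: AE_I2 simp: abs_mult intro!: mult_mono dest: fb Gb)
  have iff: "integrable M f"
    by (rule integrable_const_bound[where B="\<bar>B\<bar>"]) (auto intro!: AE_I2 dest!: fb)
  have flnf: "\<bar>f x * ln (f x)\<bar> \<le> 1 + B * B" if "x \<in> space M" for x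
  proof -
    from fb[OF that] have f0: "0 \<le> f x" "f x \<le> B" by auto
    show ?thesis
    proof (cases "f x = 0")
      case False
      then have fp: "f x > 0" using f0 by simp
      have "ln (f x) \<le> f x - 1" using fp by (intro ln_le_minus_one) 
      then have u: "f x * ln (f x) \<le> f x * (f x - 1)" using fp by (intro mult_left_mono) auto
      have "ln (1 / f x) \<le> 1 / f x - 1" using fp by (intro ln_le_minus_one) auto
      then have "- ln (f x) \<le> 1 / f x - 1" using fp by (simp add: ln_div)
      then have "f x * (- ln (f x)) \<le> f x * (1 / f x - 1)" using fp by (intro mult_left_mono) auto
      moreover have "f x * (1 / f x - 1) = 1 - f x" using fp by (simp add: field_simps)
      ultimately have l: "f x * ln (f x) \<ge> f x - 1" by simp
      have "f x * f x \<le> B * B" using f0 by (intro mult_mono) auto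
      moreover have "f x * (f x - 1) = f x * f x - f x" by (simp add: algebra_simps)
      moreover have "0 \<le> B * B" by simp
      ultimately show ?thesis using u l f0 unfolding abs_le_iff by linarith
    qed simp
  qed
  have iflnf: "integrable M (\<lambda>x. f x * ln (f x))"
    by (rule integrable_const_bound[where B="1 + B * B"]) (auto intro!: AE_I2 dest!: flnf)
  have pt: "f x * (G x - ln Z) + f x - exp (G x) / Z \<le> f x * ln (f x)" if "x \<in> space M" for x
  proof -
    have "f x * ln (exp (G x) / Z) + f x - exp (G x) / Z \<le> f x * ln (f x)"
      using fb[OF that] Zpos by (intro xlnx_ineq) auto
    then show ?thesis using Zpos by (simp add: ln_div)
  qed
  have "(\<integral>x. f x * (G x - ln Z) + f x - exp (G x) / Z \<partial>M) \<le> (\<integral>x. f x * ln (f x) \<partial>M)"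
    using pt iflnf ifG iff iexp by (intro integral_mono) (auto simp: algebra_simps)
  also have "(\<integral>x. f x * (G x - ln Z) + f x - exp (G x) / Z \<partial>M)
     = (\<integral>x. f x * G x \<partial>M) - ln Z * (\<integral>x. f x \<partial>M) + (\<integral>x. f x \<partial>M) - Z / Z"
    using ifG iff iexp unfolding Z_def
    by (simp add: algebra_simps)
  finally show ?thesis using f1 Zpos unfolding Z_def by simp
qed

lemma Pinsker_fun:
  fixes M :: "'a measure" and f g :: "'a \<Rightarrow> real"
  assumes PM: "prob_space M"
    and fm[measurable]: "f \<in> borel_measurable M" and gm[measurable]: "g \<in> borel_measurable M"
    and fb: "\<And>x. x \<in> space M \<Longrightarrow> 0 \<le> f x \<and> f x \<le> B"
    and gb: "\<And>x. x \<in> space M \<Longrightarrow> lo \<le> g x \<and> g x \<le> lo + 1"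
    and f1: "(\<integral>x. f x \<partial>M) = 1"
  shows "(\<integral>x. f x * g x \<partial>M) - (\<integral>x. g x \<partial>M) \<le> sqrt ((\<integral>x. f x * ln (f x) \<partial>M) / 2)"
proof -
  interpret prob_space M by fact
  define KL where "KL = (\<integral>x. f x * ln (f x) \<partial>M)"
  define D where "D = (\<integral>x. f x * g x \<partial>M) - (\<integral>x. g x \<partial>M)"
  have "(\<integral>x. f x * 0 \<partial>M) - ln (\<integral>x. exp 0 \<partial>M) \<le> KL"
    unfolding KL_def by (rule DV_ineq[OF PM fm _ fb, where C=0]) (auto simp: f1)
  then have KL0: "KL \<ge> 0" using prob_space by simp
  show ?thesis
  proof (cases "D \<le> 0")
    case True
    have "0 \<le> sqrt (KL / 2)" using KL0 by simp
    then show ?thesis using True unfolding D_def[symmetric] KL_def[symmetric] by linarith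
  next
    case False
    define l where "l = 4 * D"
    have lpos: "l > 0" using False unfolding l_def by simp
    interpret ib: interval_bounded_random_variable M g lo "lo + 1"
      by unfold_locales (auto intro!: AE_I2 dest: gb)
    define E where "E = (\<integral>x. g x \<partial>M)"
    have "nn_integral M (\<lambda>x. exp (l * (g x - E))) \<le> ennreal (exp (l\<^sup>2 * (lo + 1 - lo)\<^sup>2 / 8))"
      unfolding E_def by (rule ib.Hoeffdings_lemma_nn_integral[OF lpos])
    then have hn: "nn_integral M (\<lambda>x. exp (l * (g x - E))) \<le> ennreal (exp (l\<^sup>2 / 8))" by simp
    have Eb: "lo \<le> E \<and> E \<le> lo + 1" unfolding E_def
      using integral_mono[OF integrable_const ib.integrable, of lo] integral_mono[OF ib.integrable integrable_const, of "lo+1"] gb prob_space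
      by auto
    have Gb: "\<bar>l * (g x - E)\<bar> \<le> l * 1" if "x \<in> space M" for x
      using gb[OF that] Eb lpos by (simp add: abs_mult abs_le_iff)
    have ie: "integrable M (\<lambda>x. exp (l * (g x - E)))"
      by (rule integrable_const_bound[where B="exp (l * 1)"]) (auto intro!: AE_I2 dest!: Gb)
    have "ennreal (\<integral>x. exp (l * (g x - E)) \<partial>M) = nn_integral M (\<lambda>x. exp (l * (g x - E)))"
      by (rule nn_integral_eq_integral[symmetric]) (auto intro: ie)
    with hn have "ennreal (\<integral>x. exp (l * (g x - E)) \<partial>M) \<le> ennreal (exp (l\<^sup>2 / 8))"
      by simp
    then have "(\<integral>x. exp (l * (g x - E)) \<partial>M) \<le> exp (l\<^sup>2 / 8)"
      by (subst (asm) ennreal_le_iff) auto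
    moreover have "(\<integral>x. exp (- (l * 1)) \<partial>M) \<le> (\<integral>x. exp (l * (g x - E)) \<partial>M)"
      using Gb by (intro integral_mono ie) (auto simp: abs_le_iff dest!: Gb)
    moreover have "(\<integral>x. exp (- (l * 1)) \<partial>M) = exp (- l)" using prob_space by simp
    ultimately have "0 < (\<integral>x. exp (l * (g x - E)) \<partial>M)"
      "(\<integral>x. exp (l * (g x - E)) \<partial>M) \<le> exp (l\<^sup>2 / 8)"
      using exp_gt_zero[of "-l"] by linarith+
    then have lnb: "ln (\<integral>x. exp (l * (g x - E)) \<partial>M) \<le> l\<^sup>2 / 8"
      by (metis ln_exp ln_le_cancel_iff exp_gt_zero)
    have dv: "(\<integral>x. f x * (l * (g x - E)) \<partial>M) - ln (\<integral>x. exp (l * (g x - E)) \<partial>M) \<le> KL"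
      unfolding KL_def by (rule DV_ineq[OF PM fm _ fb Gb f1]) simp
    have iff: "integrable M f"
      by (rule integrable_const_bound[where B="\<bar>B\<bar>"]) (auto intro!: AE_I2 dest!: fb)
    have ifg: "integrable M (\<lambda>x. f x * g x)"
      by (rule integrable_const_bound[where B="\<bar>B\<bar> * (\<bar>lo\<bar> + 1)"])
        (auto intro!: AE_I2 simp: abs_mult intro!: mult_mono dest: fb gb)
    have "(\<integral>x. f x * (l * (g x - E)) \<partial>M) = l * ((\<integral>x. f x * g x \<partial>M) - E * (\<integral>x. f x \<partial>M))"
      using iff ifg by (simp add: algebra_simps)
    also have "\<dots> = l * D" using f1 unfolding D_def E_def by simp
    finally have "l * D - l\<^sup>2 / 8 \<le> KL" using dv lnb by linarith
    then have "2 * D\<^sup>2 \<le> KL" unfolding l_def by (simp add: power2_eq_square)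
    then have "D\<^sup>2 \<le> KL / 2" by simp
    then have "D \<le> sqrt (KL / 2)" by (rule real_le_rsqrt)
    then show ?thesis unfolding D_def KL_def .
  qed
qed

lemma ennreal_min_enn2real:
  fixes y :: ennreal assumes "y \<le> ennreal c" "0 \<le> c"
  shows "y = ennreal (min c (enn2real y))"
proof (cases y)
  case (real r)
  then have "r \<le> c" using assms by (simp add: ennreal_le_iff)
  then show ?thesis using real by (simp add: min_def)
next
  case top
  then show ?thesis using assms by (simp add: top_unique)
qed

lemma KL_Pinsker:
  fixes Mp N :: "'a measure" and g :: "'a \<Rightarrow> real" and c :: real
  assumes PM: "prob_space Mp" and PN: "prob_space N" and sN: "sets N = sets Mp"
    and le: "\<And>A. A \<in> sets Mp \<Longrightarrow> emeasure N A \<le> ennreal c * emeasure Mp A"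
    and c0: "0 \<le> c"
    and gm[measurable]: "g \<in> borel_measurable Mp"
    and gb: "\<And>x. x \<in> space Mp \<Longrightarrow> lo \<le> g x \<and> g x \<le> lo + 1"
  shows "(\<integral>x. g x \<partial>N) - (\<integral>x. g x \<partial>Mp) \<le> sqrt (KL_divergence (exp 1) Mp N / 2)"
proof -
  interpret Mp: prob_space Mp by fact
  interpret N: prob_space N by fact
  have ac: "absolutely_continuous Mp N"
    unfolding absolutely_continuous_def
  proof
    fix A assume "A \<in> null_sets Mp"
    then have "A \<in> sets N" "emeasure N A \<le> 0" using le[of A] sN by (auto simp: null_sets_def)
    then show "A \<in> null_sets N" by (auto simp: null_sets_def)
  qed
  define F where "F = RN_deriv Mp N"
  have Fm[measurable]: "F \<in> borel_measurable Mp" unfolding F_def by simp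
  have dF: "density Mp F = N" unfolding F_def by (rule Mp.density_RN_deriv[OF ac sN])
  have AEF: "AE x in Mp. F x \<le> ennreal c"
  proof (rule ccontr)
    assume nAE: "\<not> (AE x in Mp. F x \<le> ennreal c)"
    define A where "A = {x \<in> space Mp. ennreal c < F x}"
    have Am[measurable]: "A \<in> sets Mp" unfolding A_def by measurable
    have "(\<integral>\<^sup>+x. ennreal c * indicator A x \<partial>Mp) < (\<integral>\<^sup>+x. F x * indicator A x \<partial>Mp)"
    proof (rule nn_integral_less)
      show "(\<integral>\<^sup>+x. ennreal c * indicator A x \<partial>Mp) \<noteq> \<infinity>"
        using Am by (simp add: nn_integral_cmult_indicator ennreal_mult_eq_top_iff Mp.emeasure_space_1)
      show "AE x in Mp. ennreal c * indicator A x \<le> F x * indicator A x"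
        by (intro AE_I2) (auto simp: A_def indicator_def less_imp_le)
      show "\<not> (AE x in Mp. F x * indicator A x \<le> ennreal c * indicator A x)"
      proof
        assume "AE x in Mp. F x * indicator A x \<le> ennreal c * indicator A x"
        from this AE_space have "AE x in Mp. F x \<le> ennreal c"
          by eventually_elim (case_tac "ennreal c < F x", auto simp: A_def indicator_def not_less)
        with nAE show False by simp
      qed
    qed auto
    also have "(\<integral>\<^sup>+x. F x * indicator A x \<partial>Mp) = emeasure N A"
      using Am by (simp add: dF[symmetric] emeasure_density)
    also have "\<dots> \<le> ennreal c * emeasure Mp A" by (rule le[OF Am])
    also have "\<dots> = (\<integral>\<^sup>+x. ennreal c * indicator A x \<partial>Mp)"
      using Am by (simp add: nn_integral_cmult_indicator)
    finally show False by simp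
  qed
  define f where "f x = min c (enn2real (F x))" for x
  have fm[measurable]: "f \<in> borel_measurable Mp" unfolding f_def by measurable
  have fb: "0 \<le> f x \<and> f x \<le> c" for x unfolding f_def using c0 by auto
  have AEf: "AE x in Mp. F x = ennreal (f x)"
    using AEF by eventually_elim (unfold f_def, rule ennreal_min_enn2real, use c0 in auto)
  have dN: "N = density Mp (\<lambda>x. ennreal (f x))"
    using AEf by (subst dF[symmetric]) (intro density_cong; auto)
  have KL: "KL_divergence (exp 1) Mp N = (\<integral>x. f x * log (exp 1) (f x) \<partial>Mp)"
    unfolding dN by (rule Mp.KL_density) (auto simp: fb)
  have KL': "KL_divergence (exp 1) Mp N = (\<integral>x. f x * ln (f x) \<partial>Mp)"
    unfolding KL by (simp add: log_def)
  have ig: "(\<integral>x. g x \<partial>N) = (\<integral>x. f x * g x \<partial>Mp)"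
    unfolding dN by (subst integral_density) (auto simp: fb)
  have "(\<integral>x. 1 \<partial>N) = (\<integral>x. f x * 1 \<partial>Mp)"
    unfolding dN by (subst integral_density) (auto simp: fb)
  then have f1: "(\<integral>x. f x \<partial>Mp) = 1" using N.prob_space by simp
  show ?thesis unfolding ig KL'
    by (rule Pinsker_fun[OF PM fm gm _ gb f1]) (use fb in auto)
qed

lemma xlnx_abs_bound:
  fixes x B :: real assumes "0 \<le> x \<and> x \<le> B"
  shows "\<bar>x * ln x\<bar> \<le> 1 + B * B"
proof (cases "x = 0")
  case False
  then have fp: "x > 0" using assms by simp
  have "ln x \<le> x - 1" using fp by (intro ln_le_minus_one)
  then have u: "x * ln x \<le> x * (x - 1)" using fp by (intro mult_left_mono) auto
  have "ln (1 / x) \<le> 1 / x - 1" using fp by (intro ln_le_minus_one) auto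
  then have "- ln x \<le> 1 / x - 1" using fp by (simp add: ln_div)
  then have "x * (- ln x) \<le> x * (1 / x - 1)" using fp by (intro mult_left_mono) auto
  moreover have "x * (1 / x - 1) = 1 - x" using fp by (simp add: field_simps)
  ultimately have l: "x * ln x \<ge> x - 1" by simp
  have "x * x \<le> B * B" using assms by (intro mult_mono) auto
  moreover have "x * (x - 1) = x * x - x" by (simp add: algebra_simps)
  moreover have "0 \<le> B * B" by simp
  ultimately show ?thesis using u l assms unfolding abs_le_iff by linarith
qed simp

lemma bounded_integrable0:
  fixes f :: "'a \<Rightarrow> real"
  assumes "finite_measure M" "f \<in> borel_measurable M" "\<And>x. x \<in> space M \<Longrightarrow> \<bar>f x\<bar> \<le> B"
  shows "integrable M f"
  using assms by (intro finite_measure.integrable_const_bound[where B=B]) (auto intro!: AE_I2)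

lemma KL_abs_bound:
  fixes Mp N :: "'a measure" and c :: real
  assumes PM: "prob_space Mp" and PN: "prob_space N" and sN: "sets N = sets Mp"
    and le: "\<And>A. A \<in> sets Mp \<Longrightarrow> emeasure N A \<le> ennreal c * emeasure Mp A"
    and c0: "0 \<le> c"
  shows "\<bar>KL_divergence (exp 1) Mp N\<bar> \<le> 1 + c * c"
proof -
  interpret Mp: prob_space Mp by fact
  interpret N: prob_space N by fact
  have ac: "absolutely_continuous Mp N"
    unfolding absolutely_continuous_def
  proof
    fix A assume "A \<in> null_sets Mp"
    then have "A \<in> sets N" "emeasure N A \<le> 0" using le[of A] sN by (auto simp: null_sets_def)
    then show "A \<in> null_sets N" by (auto simp: null_sets_def)
  qed
  define F where "F = RN_deriv Mp N"
  have Fm[measurable]: "F \<in> borel_measurable Mp" unfolding F_def by simp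
  have dF: "density Mp F = N" unfolding F_def by (rule Mp.density_RN_deriv[OF ac sN])
  have AEF: "AE x in Mp. F x \<le> ennreal c"
  proof (rule ccontr)
    assume nAE: "\<not> (AE x in Mp. F x \<le> ennreal c)"
    define A where "A = {x \<in> space Mp. ennreal c < F x}"
    have Am[measurable]: "A \<in> sets Mp" unfolding A_def by measurable
    have "(\<integral>\<^sup>+x. ennreal c * indicator A x \<partial>Mp) < (\<integral>\<^sup>+x. F x * indicator A x \<partial>Mp)"
    proof (rule nn_integral_less)
      show "(\<integral>\<^sup>+x. ennreal c * indicator A x \<partial>Mp) \<noteq> \<infinity>"
        using Am by (simp add: nn_integral_cmult_indicator ennreal_mult_eq_top_iff Mp.emeasure_space_1)
      show "AE x in Mp. ennreal c * indicator A x \<le> F x * indicator A x"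
        by (intro AE_I2) (auto simp: A_def indicator_def less_imp_le)
      show "\<not> (AE x in Mp. F x * indicator A x \<le> ennreal c * indicator A x)"
      proof
        assume "AE x in Mp. F x * indicator A x \<le> ennreal c * indicator A x"
        from this AE_space have "AE x in Mp. F x \<le> ennreal c"
          by eventually_elim (case_tac "ennreal c < F x", auto simp: A_def indicator_def not_less)
        with nAE show False by simp
      qed
    qed auto
    also have "(\<integral>\<^sup>+x. F x * indicator A x \<partial>Mp) = emeasure N A"
      using Am by (simp add: dF[symmetric] emeasure_density)
    also have "\<dots> \<le> ennreal c * emeasure Mp A" by (rule le[OF Am])
    also have "\<dots> = (\<integral>\<^sup>+x. ennreal c * indicator A x \<partial>Mp)"
      using Am by (simp add: nn_integral_cmult_indicator)
    finally show False by simp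
  qed
  define f where "f x = min c (enn2real (F x))" for x
  have fm[measurable]: "f \<in> borel_measurable Mp" unfolding f_def by measurable
  have fb: "0 \<le> f x \<and> f x \<le> c" for x unfolding f_def using c0 by auto
  have AEf: "AE x in Mp. F x = ennreal (f x)"
    using AEF by eventually_elim (unfold f_def, rule ennreal_min_enn2real, use c0 in auto)
  have dN: "N = density Mp (\<lambda>x. ennreal (f x))"
    using AEf by (subst dF[symmetric]) (intro density_cong; auto)
  have KL: "KL_divergence (exp 1) Mp N = (\<integral>x. f x * log (exp 1) (f x) \<partial>Mp)"
    unfolding dN by (rule Mp.KL_density) (auto simp: fb)
  have KL': "KL_divergence (exp 1) Mp N = (\<integral>x. f x * ln (f x) \<partial>Mp)"
    unfolding KL by (simp add: log_def)
  have "(\<integral>x. 1 \<partial>N) = (\<integral>x. f x * 1 \<partial>Mp)"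
    unfolding dN by (subst integral_density) (auto simp: fb)
  then have f1: "(\<integral>x. f x \<partial>Mp) = 1" using N.prob_space by simp
  have iflnf: "integrable Mp (\<lambda>x. f x * ln (f x))"
    by (rule bounded_integrable0[where B="1 + c * c"]) (auto intro: Mp.finite_measure_axioms intro!: xlnx_abs_bound simp: fb)
  have "(\<integral>x. f x * ln (f x) \<partial>Mp) \<le> (\<integral>x. 1 + c * c \<partial>Mp)"
    using xlnx_abs_bound[OF fb] by (intro integral_mono iflnf Mp.integrable_const) (auto simp: abs_le_iff)
  moreover have "(\<integral>x. - (1 + c * c) \<partial>Mp) \<le> (\<integral>x. f x * ln (f x) \<partial>Mp)"
  proof (intro integral_mono iflnf Mp.integrable_const)
    fix x show "- (1 + c * c) \<le> f x * ln (f x)" using xlnx_abs_bound[OF fb[of x]] by (simp add: abs_le_iff)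
  qed
  ultimately show ?thesis unfolding KL' using Mp.prob_space by (simp add: abs_le_iff)
qed



lemma meas_count2:
  assumes "finite A" "\<And>u. u \<in> A \<Longrightarrow> (\<lambda>w. f (w, u)) \<in> M \<rightarrow>\<^sub>M K"
  shows "f \<in> M \<Otimes>\<^sub>M count_space A \<rightarrow>\<^sub>M K"
proof -
  have "(\<lambda>(u, w). f (w, u)) \<in> count_space A \<Otimes>\<^sub>M M \<rightarrow>\<^sub>M K"
    by (rule measurable_pair_measure_countable1) (use assms in \<open>auto intro: countable_finite\<close>)
  then have "(\<lambda>(x, y). (\<lambda>(u, w). f (w, u)) (y, x)) \<in> M \<Otimes>\<^sub>M count_space A \<rightarrow>\<^sub>M K"
    by (subst (asm) measurable_pair_swap_iff)
  then show ?thesis by (simp add: case_prod_beta')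
qed

lemma meas_unif2:
  assumes "finite A" "\<And>u. u \<in> A \<Longrightarrow> (\<lambda>w. f (w, u)) \<in> M \<rightarrow>\<^sub>M K"
  shows "f \<in> M \<Otimes>\<^sub>M uniform_count_measure A \<rightarrow>\<^sub>M K"
proof -
  have "f \<in> M \<Otimes>\<^sub>M count_space A \<rightarrow>\<^sub>M K" by (rule meas_count2[OF assms])
  moreover have "sets (M \<Otimes>\<^sub>M uniform_count_measure A) = sets (M \<Otimes>\<^sub>M count_space A)"
    by (intro sets_pair_measure_cong refl sets_uniform_count_measure_count_space)
  ultimately show ?thesis by (simp add: measurable_def space_pair_measure space_uniform_count_measure)
qed

lemma bounded_integrable:
  fixes f :: "'a \<Rightarrow> real"
  assumes "finite_measure M" "f \<in> borel_measurable M" "\<And>x. x \<in> space M \<Longrightarrow> \<bar>f x\<bar> \<le> B"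
  shows "integrable M f"
  using assms by (intro finite_measure.integrable_const_bound[where B=B]) (auto intro!: AE_I2)

lemma L_unif:
  fixes MW :: "'w measure" and \<phi> :: "'w \<times> nat \<Rightarrow> real"
  assumes PW: "prob_space MW" and n: "n > 0"
    and pm: "\<And>u. u < n \<Longrightarrow> (\<lambda>w. \<phi> (w, u)) \<in> borel_measurable MW"
    and pb: "\<And>w u. \<bar>\<phi> (w, u)\<bar> \<le> B"
  shows "(\<integral>s. \<phi> s \<partial>(MW \<Otimes>\<^sub>M uniform_count_measure {..<n})) = (\<Sum>u<n. \<integral>w. \<phi> (w, u) \<partial>MW) / n"
proof -
  interpret W: prob_space MW by fact
  interpret U: prob_space "uniform_count_measure {..<n}"
    using n by (intro prob_space_uniform_count_measure) auto
  interpret pair_prob_space MW "uniform_count_measure {..<n}" ..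
  have m: "\<phi> \<in> borel_measurable (MW \<Otimes>\<^sub>M uniform_count_measure {..<n})"
    by (rule meas_unif2) (use pm in auto)
  have i: "integrable (MW \<Otimes>\<^sub>M uniform_count_measure {..<n}) \<phi>"
    by (rule bounded_integrable[OF _ m, where B=B]) (auto simp: pb intro: P.finite_measure_axioms)
  have "(\<integral>s. \<phi> s \<partial>(MW \<Otimes>\<^sub>M uniform_count_measure {..<n})) = (\<integral>w. (\<integral>u. \<phi> (w, u) \<partial>uniform_count_measure {..<n}) \<partial>MW)"
    by (rule integral_fst'[OF i, symmetric])
  also have "\<dots> = (\<integral>w. (\<Sum>u<n. \<phi> (w, u)) / n \<partial>MW)"
    by (simp add: integral_uniform_count_measure)
  also have "\<dots> = (\<Sum>u<n. \<integral>w. \<phi> (w, u) \<partial>MW) / n"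
  proof -
    have "(\<integral>w. (\<Sum>u<n. \<phi> (w, u)) \<partial>MW) = (\<Sum>u<n. \<integral>w. \<phi> (w, u) \<partial>MW)"
      by (rule Bochner_Integration.integral_sum[where f="\<lambda>u w. \<phi> (w, u)"]) (auto intro!: bounded_integrable[where B=B] pm simp: pb W.finite_measure_axioms)
    then show ?thesis by simp
  qed
  finally show ?thesis .
qed



lemma nn_unif:
  fixes MW :: "'w measure" and \<psi> :: "'w \<times> nat \<Rightarrow> ennreal"
  assumes PW: "prob_space MW" and n: "n > 0"
    and pm: "\<psi> \<in> borel_measurable (MW \<Otimes>\<^sub>M uniform_count_measure {..<n})"
  shows "(\<integral>\<^sup>+s. \<psi> s \<partial>(MW \<Otimes>\<^sub>M uniform_count_measure {..<n})) = (\<integral>\<^sup>+w. (\<Sum>u<n. ennreal (1 / n) * \<psi> (w, u)) \<partial>MW)"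
proof -
  interpret U: prob_space "uniform_count_measure {..<n}"
    using n by (intro prob_space_uniform_count_measure) auto
  have "(\<integral>\<^sup>+s. \<psi> s \<partial>(MW \<Otimes>\<^sub>M uniform_count_measure {..<n})) = (\<integral>\<^sup>+w. (\<integral>\<^sup>+u. \<psi> (w, u) \<partial>uniform_count_measure {..<n}) \<partial>MW)"
    by (rule U.nn_integral_fst[OF pm, symmetric])
  also have "\<dots> = (\<integral>\<^sup>+w. (\<Sum>u<n. ennreal (1 / n) * \<psi> (w, u)) \<partial>MW)"
    by (simp add: uniform_count_measure_def nn_integral_point_measure_finite)
  finally show ?thesis .
qed

lemma per_z:
  fixes MW :: "'w measure" and T :: "'t measure" and X :: "'w \<Rightarrow> nat \<Rightarrow> 't" and a :: "'t \<Rightarrow> nat \<Rightarrow> real"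
  assumes PW: "prob_space MW" and n: "n > 0"
    and Xm: "\<And>u. u < n \<Longrightarrow> (\<lambda>w. X w u) \<in> MW \<rightarrow>\<^sub>M T"
    and am: "\<And>u. u < n \<Longrightarrow> (\<lambda>t. a t u) \<in> borel_measurable T"
    and ab: "\<And>t u. 0 \<le> a t u \<and> a t u \<le> 1"
  shows "\<bar>(\<Sum>u<n. \<integral>w. a (X w u) u \<partial>MW) / n - (\<Sum>v<n. \<integral>w. (\<Sum>u<n. a (X w v) u) / n \<partial>MW) / n\<bar>
    \<le> sqrt (prob_space.mutual_information (MW \<Otimes>\<^sub>M uniform_count_measure {..<n}) (exp 1) T
          (count_space {..<n}) (\<lambda>(w, u). X w u) snd / 2)
    \<and> \<bar>prob_space.mutual_information (MW \<Otimes>\<^sub>M uniform_count_measure {..<n}) (exp 1) T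
          (count_space {..<n}) (\<lambda>(w, u). X w u) snd\<bar> \<le> 1 + real n * real n"
proof -
  define U where "U = uniform_count_measure {..<n}"
  define S where "S = MW \<Otimes>\<^sub>M U"
  define C where "C = count_space {..<n}"
  interpret W: prob_space MW by fact
  interpret U: prob_space U
    unfolding U_def using n by (intro prob_space_uniform_count_measure) auto
  interpret S: prob_space S unfolding S_def by (intro prob_space_pair PW U.prob_space_axioms)
  define Xs where "Xs = (\<lambda>(w, u). X w u)"
  have Xsm[measurable]: "Xs \<in> S \<rightarrow>\<^sub>M T"
    unfolding S_def U_def Xs_def by (rule meas_unif2) (use Xm in auto)
  have sndm[measurable]: "snd \<in> S \<rightarrow>\<^sub>M C"
    unfolding S_def U_def C_def
  proof (rule meas_unif2)
    fix u assume "u \<in> {..<n}"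
    then show "(\<lambda>w. snd (w, u)) \<in> MW \<rightarrow>\<^sub>M count_space {..<n}"
      using measurable_const[of u "count_space {..<n}" MW] by simp
  qed simp
  have sndm'[measurable]: "snd \<in> S \<rightarrow>\<^sub>M count_space {..<n}" using sndm unfolding C_def .
  define XY where "XY = (\<lambda>s. (Xs s, snd s))"
  have XYm[measurable]: "XY \<in> S \<rightarrow>\<^sub>M T \<Otimes>\<^sub>M C" unfolding XY_def by measurable
  define N where "N = distr S (T \<Otimes>\<^sub>M C) XY"
  define DT where "DT = distr S T Xs"
  define DC where "DC = distr S C snd"
  define Mp where "Mp = DT \<Otimes>\<^sub>M DC"
  interpret DT: prob_space DT unfolding DT_def by (rule S.prob_space_distr) simp
  interpret DC: prob_space DC unfolding DC_def by (rule S.prob_space_distr) simp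
  interpret DTC: pair_prob_space DT DC ..
  have PN: "prob_space N" unfolding N_def by (rule S.prob_space_distr) simp
  have PMp: "prob_space Mp" unfolding Mp_def by (rule DTC.prob_space_axioms)
  have sDT: "sets DT = sets T" unfolding DT_def by simp
  have sDC: "sets DC = sets C" unfolding DC_def by simp
  have sMp: "sets Mp = sets (T \<Otimes>\<^sub>M C)" unfolding Mp_def
    by (intro sets_pair_measure_cong sDT sDC)
  have sN: "sets N = sets Mp" unfolding N_def using sMp by simp
  have MI: "prob_space.mutual_information S (exp 1) T C Xs snd = KL_divergence (exp 1) Mp N"
    unfolding S.mutual_information_def Mp_def DT_def DC_def N_def XY_def ..
  define a2 where "a2 = (\<lambda>(t, u). a t u)"
  have a2m: "a2 \<in> borel_measurable (T \<Otimes>\<^sub>M C)"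
    unfolding a2_def C_def by (rule meas_count2) (use am in auto)
  have a2m': "a2 \<in> borel_measurable Mp" using a2m by (subst measurable_cong_sets[OF sMp refl])
  have le: "emeasure N A \<le> ennreal (real n) * emeasure Mp A" if A: "A \<in> sets Mp" for A
  proof -
    have A': "A \<in> sets (T \<Otimes>\<^sub>M C)" using A sMp by simp
    have indm: "(\<lambda>t. indicator A (t, u) :: ennreal) \<in> borel_measurable T" if "u < n" for u
      using A' that by (measurable; simp add: C_def)
    have eN: "emeasure N A = (\<integral>\<^sup>+s. indicator A (XY s) \<partial>S)"
    proof -
      have "emeasure N A = (\<integral>\<^sup>+x. indicator A x \<partial>N)" using A sN by simp
      also have "\<dots> = (\<integral>\<^sup>+s. indicator A (XY s) \<partial>S)"
        unfolding N_def using A' by (intro nn_integral_distr) auto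
      finally show ?thesis .
    qed
    have inner: "(\<integral>\<^sup>+u. indicator A (t, u) \<partial>DC) = (\<Sum>u<n. ennreal (1 / n) * indicator A (t, u))" for t
    proof -
      have "(\<integral>\<^sup>+u. indicator A (t, u) \<partial>DC) = (\<integral>\<^sup>+s. indicator A (t, snd s) \<partial>S)"
        unfolding DC_def by (subst nn_integral_distr) (auto simp: C_def)
      also have "\<dots> = (\<integral>\<^sup>+w. (\<Sum>u<n. ennreal (1 / n) * indicator A (t, snd (w, u))) \<partial>MW)"
        unfolding S_def U_def by (rule nn_unif[OF PW n]) (auto simp: C_def intro!: meas_unif2)
      also have "\<dots> = (\<Sum>u<n. ennreal (1 / n) * indicator A (t, u))"
        by (simp add: W.emeasure_space_1)
      finally show ?thesis .
    qed
    have "emeasure Mp A = (\<integral>\<^sup>+x. indicator A x \<partial>Mp)" using A by simp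
    also have "\<dots> = (\<integral>\<^sup>+t. (\<integral>\<^sup>+u. indicator A (t, u) \<partial>DC) \<partial>DT)"
      unfolding Mp_def by (rule DC.nn_integral_fst[symmetric]) (use A in \<open>simp add: Mp_def\<close>)
    also have "\<dots> = (\<integral>\<^sup>+t. (\<Sum>u<n. ennreal (1 / n) * indicator A (t, u)) \<partial>DT)"
      by (simp add: inner)
    also have "\<dots> = (\<integral>\<^sup>+s. (\<Sum>u<n. ennreal (1 / n) * indicator A (Xs s, u)) \<partial>S)"
    proof -
      have m: "(\<lambda>t. \<Sum>u<n. ennreal (1 / n) * indicator A (t, u)) \<in> borel_measurable T"
      proof (rule borel_measurable_sum[where f="\<lambda>u t. ennreal (1 / n) * indicator A (t, u)"])
        fix u assume "u \<in> {..<n}"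
        then show "(\<lambda>t. ennreal (1 / n) * indicator A (t, u)) \<in> borel_measurable T"
          using indm[of u] by (intro borel_measurable_times_ennreal) auto
      qed
      have m': "(\<lambda>t. \<Sum>u<n. ennreal (1 / n) * indicator A (t, u)) \<in> borel_measurable (distr S T Xs)"
        using m by (subst measurable_cong_sets[OF sets_distr refl])
      show ?thesis unfolding DT_def by (rule nn_integral_distr[OF Xsm m'])
    qed
    also have "\<dots> \<ge> (\<integral>\<^sup>+s. ennreal (1 / n) * indicator A (XY s) \<partial>S)"
    proof (intro nn_integral_mono)
      fix s assume s: "s \<in> space S"
      then have "snd s < n" by (auto simp: S_def U_def space_pair_measure space_uniform_count_measure)
      then show "ennreal (1 / n) * indicator A (XY s) \<le> (\<Sum>u<n. ennreal (1 / n) * indicator A (Xs s, u))"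
        unfolding XY_def by (intro member_le_sum[where i="snd s", of "{..<n}"]) auto
    qed
    finally have "ennreal (1 / n) * emeasure N A \<le> emeasure Mp A"
      unfolding eN using A' by (subst (asm) nn_integral_cmult) auto
    then have "ennreal (real n) * (ennreal (1 / n) * emeasure N A) \<le> ennreal (real n) * emeasure Mp A"
      by (rule mult_left_mono) simp
    moreover have "ennreal (real n) * ennreal (1 / n) = 1"
      using n by (simp flip: ennreal_mult)
    ultimately show ?thesis by (simp add: mult.assoc[symmetric])
  qed
  have ia2N: "(\<integral>x. a2 x \<partial>N) = (\<Sum>u<n. \<integral>w. a (X w u) u \<partial>MW) / n"
  proof -
    have "(\<integral>x. a2 x \<partial>N) = (\<integral>s. a2 (XY s) \<partial>S)"
      unfolding N_def by (rule integral_distr) (auto intro: a2m)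
    also have "\<dots> = (\<integral>s. a (X (fst s) (snd s)) (snd s) \<partial>S)"
      by (simp add: a2_def XY_def Xs_def case_prod_beta)
    also have "\<dots> = (\<Sum>u<n. \<integral>w. a (X w u) u \<partial>MW) / n"
      unfolding S_def U_def
      by (rule L_unif[OF PW n, where B=1, of "\<lambda>s. a (X (fst s) (snd s)) (snd s)", simplified])
         (use ab in \<open>auto intro: measurable_compose[OF Xm am] simp: abs_le_iff\<close>)
    finally show ?thesis .
  qed
  have ia2M: "(\<integral>x. a2 x \<partial>Mp) = (\<Sum>v<n. \<integral>w. (\<Sum>u<n. a (X w v) u) / n \<partial>MW) / n"
  proof -
    have ia: "integrable Mp a2"
      by (rule bounded_integrable[OF _ a2m', where B=1])
         (use ab in \<open>auto simp: a2_def abs_le_iff split: prod.splits intro: prob_space.finite_measure PMp\<close>)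
    have "(\<integral>x. a2 x \<partial>Mp) = (\<integral>t. (\<integral>u. a2 (t, u) \<partial>DC) \<partial>DT)"
      unfolding Mp_def by (rule DTC.integral_fst'[symmetric]) (use ia in \<open>simp add: Mp_def\<close>)
    also have "\<dots> = (\<integral>t. (\<Sum>u<n. a t u) / n \<partial>DT)"
    proof (rule Bochner_Integration.integral_cong[OF refl])
      fix t
      have "(\<integral>u. a2 (t, u) \<partial>DC) = (\<integral>s. a t (snd s) \<partial>S)"
        unfolding DC_def by (subst integral_distr) (auto simp: C_def a2_def)
      also have "\<dots> = (\<Sum>u<n. \<integral>w. a t u \<partial>MW) / n"
        unfolding S_def U_def
        by (subst L_unif[OF PW n, where B=1]) (use ab in \<open>auto simp: abs_le_iff\<close>)
      also have "\<dots> = (\<Sum>u<n. a t u) / n" by (simp add: W.prob_space)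
      finally show "(\<integral>u. a2 (t, u) \<partial>DC) = (\<Sum>u<n. a t u) / n" .
    qed
    also have "\<dots> = (\<integral>s. (\<Sum>u<n. a (Xs s) u) / n \<partial>S)"
    proof -
      have "(\<lambda>t. (\<Sum>u<n. a t u) / real n) \<in> borel_measurable T"
        by (rule borel_measurable_divide, rule borel_measurable_sum[where f="\<lambda>u t. a t u"]) (auto intro: am)
      then show ?thesis unfolding DT_def by (intro integral_distr[OF Xsm])
    qed
    also have "\<dots> = (\<integral>s. (\<Sum>u<n. a (X (fst s) (snd s)) u) / n \<partial>S)"
      by (simp add: Xs_def case_prod_beta)
    also have "\<dots> = (\<Sum>v<n. \<integral>w. (\<Sum>u<n. a (X w v) u) / n \<partial>MW) / n"
    proof -
      have mm: "(\<lambda>w. (\<Sum>u<n. a (X w v) u) / real n) \<in> borel_measurable MW" if "v < n" for v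
        by (rule borel_measurable_divide, rule borel_measurable_sum[where f="\<lambda>u w. a (X w v) u"])
           (use that in \<open>auto intro: measurable_compose[OF Xm am]\<close>)
      have bb: "\<bar>(\<Sum>u<n. a (X w v) u) / real n\<bar> \<le> 1" for w v
      proof -
        have "(\<Sum>u<n. a (X w v) u) \<le> (\<Sum>u<n. 1)" by (intro sum_mono) (use ab in auto)
        moreover have "0 \<le> (\<Sum>u<n. a (X w v) u)" by (intro sum_nonneg) (use ab in auto)
        ultimately show ?thesis using n by (simp add: abs_le_iff)
      qed
      show ?thesis unfolding S_def U_def
        by (subst L_unif[OF PW n, where B=1]) (use mm bb in auto)
    qed
    finally show ?thesis .
  qed
  have p1: "(\<integral>x. a2 x \<partial>N) - (\<integral>x. a2 x \<partial>Mp) \<le> sqrt (KL_divergence (exp 1) Mp N / 2)"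
    by (rule KL_Pinsker[OF PMp PN sN le _ a2m', where lo=0]) (use ab in \<open>auto simp: a2_def split: prod.splits\<close>)
  have p2: "(\<integral>x. - a2 x \<partial>N) - (\<integral>x. - a2 x \<partial>Mp) \<le> sqrt (KL_divergence (exp 1) Mp N / 2)"
    by (rule KL_Pinsker[OF PMp PN sN le, where lo="-1"]) (use ab a2m' in \<open>auto simp: a2_def split: prod.splits\<close>)
  have "\<bar>(\<integral>x. a2 x \<partial>N) - (\<integral>x. a2 x \<partial>Mp)\<bar> \<le> sqrt (KL_divergence (exp 1) Mp N / 2)"
    using p1 p2 by simp
  moreover have "\<bar>KL_divergence (exp 1) Mp N\<bar> \<le> 1 + real n * real n"
    by (rule KL_abs_bound[OF PMp PN sN le]) auto
  ultimately show ?thesis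
    unfolding ia2N ia2M MI[symmetric] by (simp add: S_def U_def C_def Xs_def)
qed



definition sig :: "nat \<Rightarrow> nat \<Rightarrow> nat" where "sig u i = (if i < u then i else Suc i)"

lemma sig_bij: "u < n \<Longrightarrow> bij_betw (sig u) {..<n-1} ({..<n} - {u})"
  unfolding bij_betw_def
proof
  show "inj_on (sig u) {..<n-1}" by (auto simp: inj_on_def sig_def split: if_splits)
  assume u: "u < n"
  show "sig u ` {..<n - 1} = {..<n} - {u}"
  proof
    show "sig u ` {..<n - 1} \<subseteq> {..<n} - {u}" using u by (auto simp: sig_def)
    show "{..<n} - {u} \<subseteq> sig u ` {..<n - 1}"
    proof
      fix j assume j: "j \<in> {..<n} - {u}"
      show "j \<in> sig u ` {..<n - 1}"
      proof (cases "j < u")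
        case True then show ?thesis using u by (intro image_eqI[of _ _ j]) (auto simp: sig_def)
      next
        case False then show ?thesis using j by (intro image_eqI[of _ _ "j - 1"]) (auto simp: sig_def)
      qed
    qed
  qed
qed

lemma sum_sig: fixes f :: "nat \<Rightarrow> 'b::ab_group_add" assumes "u < n"
  shows "(\<Sum>i<n-1. f (sig u i)) = (\<Sum>j<n. f j) - f u"
proof -
  have "(\<Sum>i<n-1. f (sig u i)) = (\<Sum>j\<in>{..<n} - {u}. f j)"
    using sum.reindex_bij_betw[OF sig_bij[OF assms], of f] by simp
  also have "\<dots> = (\<Sum>j<n. f j) - f u" using assms by (simp add: sum_diff1)
  finally show ?thesis .
qed

lemma exch:
  fixes P :: "'a measure"
  assumes PP: "prob_space P" and u: "u < n"
  shows "distr (PiM {..<n} (\<lambda>_. P)) (PiM {..<n-1} (\<lambda>_. P) \<Otimes>\<^sub>M P)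
           (\<lambda>z. (\<lambda>i\<in>{..<n-1}. z (sig u i), z u)) = PiM {..<n-1} (\<lambda>_. P) \<Otimes>\<^sub>M P"
proof -
  interpret Pp: prob_space P by fact
  define I where "I = {..<n} - {u}"
  have insI: "insert u I = {..<n}" using u by (auto simp: I_def)
  define R where "R = (\<lambda>X::nat \<Rightarrow> 'a. \<lambda>i\<in>{..<n-1}. X (sig u i))"
  define upd where "upd = (\<lambda>(x::'a, X::nat \<Rightarrow> 'a). X(u := x))"
  interpret PI: prob_space "PiM I (\<lambda>_. P)" by (intro prob_space_PiM PP)
  interpret Pn1: prob_space "PiM {..<n-1} (\<lambda>_. P)" by (intro prob_space_PiM PP)
  interpret pp: pair_prob_space P "PiM I (\<lambda>_. P)" ..
  interpret sw: pair_prob_space "PiM I (\<lambda>_. P)" P ..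
  have D1: "distr (P \<Otimes>\<^sub>M PiM I (\<lambda>_. P)) (PiM {..<n} (\<lambda>_. P)) upd = PiM {..<n} (\<lambda>_. P)"
    using distr_pair_PiM_eq_PiM[of I "\<lambda>_. P" u] PP unfolding upd_def insI by simp
  have updm: "upd \<in> P \<Otimes>\<^sub>M PiM I (\<lambda>_. P) \<rightarrow>\<^sub>M PiM {..<n} (\<lambda>_. P)"
    unfolding upd_def
    using measurable_fun_upd[where I="{..<n}" and J=I and i=u and M="\<lambda>_. P" and N="P \<Otimes>\<^sub>M PiM I (\<lambda>_. P)"
        and f=snd and h=fst] insI
    by (simp add: case_prod_beta' Un_commute)
  have sigI: "sig u \<in> {..<n-1} \<rightarrow> I" using sig_bij[OF u] unfolding I_def bij_betw_def by auto
  have Rm: "R \<in> PiM I (\<lambda>_. P) \<rightarrow>\<^sub>M PiM {..<n-1} (\<lambda>_. P)"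
    unfolding R_def by (intro measurable_restrict measurable_component_singleton) (use sigI in auto)
  have DR: "distr (PiM I (\<lambda>_. P)) (PiM {..<n-1} (\<lambda>_. P)) R = PiM {..<n-1} (\<lambda>_. P)"
    unfolding R_def
    using distr_PiM_reindex[of I "\<lambda>_. P" "sig u" "{..<n-1}"] PP sig_bij[OF u] sigI
    unfolding bij_betw_def by simp
  define gz where "gz = (\<lambda>z::nat \<Rightarrow> 'a. (\<lambda>i\<in>{..<n-1}. z (sig u i), z u))"
  have gzm: "gz \<in> PiM {..<n} (\<lambda>_. P) \<rightarrow>\<^sub>M PiM {..<n-1} (\<lambda>_. P) \<Otimes>\<^sub>M P"
    unfolding gz_def
  proof (intro measurable_Pair measurable_restrict measurable_component_singleton)
    show "sig u i \<in> {..<n}" if "i \<in> {..<n-1}" for i using sigI that u unfolding I_def by auto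
  qed (use u in auto)
  have "distr (PiM {..<n} (\<lambda>_. P)) (PiM {..<n-1} (\<lambda>_. P) \<Otimes>\<^sub>M P) gz
      = distr (P \<Otimes>\<^sub>M PiM I (\<lambda>_. P)) (PiM {..<n-1} (\<lambda>_. P) \<Otimes>\<^sub>M P) (gz \<circ> upd)"
    by (subst D1[symmetric]) (rule distr_distr[OF gzm updm])
  also have "\<dots> = distr (P \<Otimes>\<^sub>M PiM I (\<lambda>_. P)) (PiM {..<n-1} (\<lambda>_. P) \<Otimes>\<^sub>M P) ((\<lambda>(X, x). (R X, x)) \<circ> (\<lambda>(x, y). (y, x)))"
  proof (rule distr_cong[OF refl refl])
    fix p assume "p \<in> space (P \<Otimes>\<^sub>M PiM I (\<lambda>_. P))"
    have "sig u i \<noteq> u" for i by (auto simp: sig_def)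
    then show "(gz \<circ> upd) p = ((\<lambda>(X, x). (R X, x)) \<circ> (\<lambda>(x, y). (y, x))) p"
      by (auto simp: gz_def upd_def R_def split: prod.splits)
  qed
  also have "\<dots> = distr (distr (P \<Otimes>\<^sub>M PiM I (\<lambda>_. P)) (PiM I (\<lambda>_. P) \<Otimes>\<^sub>M P) (\<lambda>(x, y). (y, x)))
                     (PiM {..<n-1} (\<lambda>_. P) \<Otimes>\<^sub>M P) (\<lambda>(X, x). (R X, x))"
    by (rule distr_distr[symmetric]) (use Rm in auto)
  also have "distr (P \<Otimes>\<^sub>M PiM I (\<lambda>_. P)) (PiM I (\<lambda>_. P) \<Otimes>\<^sub>M P) (\<lambda>(x, y). (y, x)) = PiM I (\<lambda>_. P) \<Otimes>\<^sub>M P"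
    by (rule sw.distr_pair_swap[symmetric])
  also have "distr (PiM I (\<lambda>_. P) \<Otimes>\<^sub>M P) (PiM {..<n-1} (\<lambda>_. P) \<Otimes>\<^sub>M P) (\<lambda>(X, x). (R X, x))
      = distr (PiM I (\<lambda>_. P)) (PiM {..<n-1} (\<lambda>_. P)) R \<Otimes>\<^sub>M distr P P (\<lambda>x. x)"
    by (rule pair_measure_distr[symmetric]) (use Rm in \<open>auto intro: Pp.sigma_finite_measure_axioms\<close>)
  also have "\<dots> = PiM {..<n-1} (\<lambda>_. P) \<Otimes>\<^sub>M P" using DR by simp
  finally show ?thesis unfolding gz_def .
qed



lemma abs_int_le:
  fixes f :: "'a \<Rightarrow> real"
  assumes "prob_space M" "\<And>x. x \<in> space M \<Longrightarrow> \<bar>f x\<bar> \<le> B"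
  shows "\<bar>\<integral>x. f x \<partial>M\<bar> \<le> B"
proof -
  interpret prob_space M by fact
  obtain x0 where "x0 \<in> space M" using not_empty by auto
  then have B0: "0 \<le> B" using assms(2)[of x0] by simp
  show ?thesis
  proof (cases "integrable M f")
    case True
    have "(\<integral>x. f x \<partial>M) \<le> (\<integral>x. B \<partial>M)"
      using assms(2) by (intro integral_mono True) (auto simp: abs_le_iff)
    moreover have "(\<integral>x. - B \<partial>M) \<le> (\<integral>x. f x \<partial>M)"
    proof (intro integral_mono True)
      fix x assume "x \<in> space M" then show "- B \<le> f x" using assms(2)[of x] by (simp add: abs_le_iff)
    qed simp
    ultimately show ?thesis using prob_space by (simp add: abs_le_iff)
  next
    case False
    then show ?thesis using B0 by (simp add: not_integrable_integral_eq)
  qed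
qed

lemma del_eq: "del_idx n u z = (\<lambda>i\<in>{..<n-1}. z (sig u i))"
  by (auto simp: del_idx_def sig_def restrict_def)

lemma hcomp:
  assumes hm: "(\<lambda>(w, z, x). h w z x) \<in> MW \<Otimes>\<^sub>M (PN1 \<Otimes>\<^sub>M MX) \<rightarrow>\<^sub>M MR"
    and A: "A \<in> N \<rightarrow>\<^sub>M MW" and B: "B \<in> N \<rightarrow>\<^sub>M PN1" and C: "C \<in> N \<rightarrow>\<^sub>M MX"
  shows "(\<lambda>s. h (A s) (B s) (C s)) \<in> N \<rightarrow>\<^sub>M MR"
  using measurable_compose[OF measurable_Pair[OF A measurable_Pair[OF B C]] hm] by simp

lemma losscomp:
  assumes lm: "(\<lambda>(r, y). loss r y) \<in> borel_measurable (MR \<Otimes>\<^sub>M MY)"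
    and F: "F \<in> N \<rightarrow>\<^sub>M MR" and G: "G \<in> N \<rightarrow>\<^sub>M MY"
  shows "(\<lambda>s. loss (F s) (G s) :: real) \<in> borel_measurable N"
  using measurable_compose[OF measurable_Pair[OF F G] lm] by simp



lemma empm_gen:
  assumes hm: "(\<lambda>(w, z, x). h w z x) \<in> MW \<Otimes>\<^sub>M (PiM {..<m} (\<lambda>_. P) \<Otimes>\<^sub>M MX) \<rightarrow>\<^sub>M MR"
    and lm: "(\<lambda>(r, y). loss r y) \<in> borel_measurable (MR \<Otimes>\<^sub>M MY)"
    and fstm: "fst \<in> P \<rightarrow>\<^sub>M MX" and sndm: "snd \<in> P \<rightarrow>\<^sub>M MY"
    and A: "A \<in> N \<rightarrow>\<^sub>M MW" and B: "B \<in> N \<rightarrow>\<^sub>M PiM {..<m} (\<lambda>_. P)"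
  shows "(\<lambda>s. emp_loss loss h m (A s) (B s)) \<in> borel_measurable N"
  unfolding emp_loss_def
proof (rule borel_measurable_divide, rule borel_measurable_sum)
  fix i assume "i \<in> {..<m}"
  then have Bi: "(\<lambda>s. B s i) \<in> N \<rightarrow>\<^sub>M P"
    by (intro measurable_compose[OF B measurable_component_singleton]) auto
  have H: "(\<lambda>s. h (A s) (B s) (fst (B s i))) \<in> N \<rightarrow>\<^sub>M MR"
    by (rule hcomp[OF hm A B measurable_compose[OF Bi fstm]])
  show "(\<lambda>s. loss (h (A s) (B s) (fst (B s i))) (snd (B s i))) \<in> borel_measurable N"
    by (rule losscomp[OF lm H measurable_compose[OF Bi sndm]])
qed simp

lemma truem_gen:
  assumes PP: "prob_space P"
    and hm: "(\<lambda>(w, z, x). h w z x) \<in> MW \<Otimes>\<^sub>M (PN1 \<Otimes>\<^sub>M MX) \<rightarrow>\<^sub>M MR"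
    and lm: "(\<lambda>(r, y). loss r y) \<in> borel_measurable (MR \<Otimes>\<^sub>M MY)"
    and fstm: "fst \<in> P \<rightarrow>\<^sub>M MX" and sndm: "snd \<in> P \<rightarrow>\<^sub>M MY"
    and A: "A \<in> N \<rightarrow>\<^sub>M MW" and B: "B \<in> N \<rightarrow>\<^sub>M PN1"
  shows "(\<lambda>s. true_loss P loss h (A s) (B s)) \<in> borel_measurable N"
proof -
  interpret Pp: prob_space P by fact
  have H: "(\<lambda>q. h (A (fst q)) (B (fst q)) (fst (snd q))) \<in> N \<Otimes>\<^sub>M P \<rightarrow>\<^sub>M MR"
    by (rule hcomp[OF hm measurable_compose[OF measurable_fst A] measurable_compose[OF measurable_fst B]
          measurable_compose[OF measurable_snd fstm]])
  have L: "(\<lambda>q. loss (h (A (fst q)) (B (fst q)) (fst (snd q))) (snd (snd q))) \<in> borel_measurable (N \<Otimes>\<^sub>M P)"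
    by (rule losscomp[OF lm H measurable_compose[OF measurable_snd sndm]])
  have "(\<lambda>s. \<integral>p. loss (h (A s) (B s) (fst p)) (snd p) \<partial>P) \<in> borel_measurable N"
    by (rule Pp.borel_measurable_lebesgue_integral) (use L in \<open>simp add: split_beta'\<close>)
  then show ?thesis unfolding true_loss_def .
qed

theorem theorem2:
  fixes MW :: "'w measure" and MX :: "'x measure" and MY :: "'y measure"
    and MR :: "'r measure" and P :: "('x \<times> 'y) measure"
    and h :: "'w \<Rightarrow> (nat \<Rightarrow> 'x \<times> 'y) \<Rightarrow> 'x \<Rightarrow> 'r"
    and loss :: "'r \<Rightarrow> 'y \<Rightarrow> real" and n :: nat
  assumes n2: "n \<ge> 2"
    and PW: "prob_space MW"
    and PP: "prob_space P"
    and sets_P: "sets P = sets (MX \<Otimes>\<^sub>M MY)"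
    and h_meas: "(\<lambda>(w, z, x). h w z x) \<in> MW \<Otimes>\<^sub>M (PiM {..<n-1} (\<lambda>_. P) \<Otimes>\<^sub>M MX) \<rightarrow>\<^sub>M MR"
    and loss_meas: "(\<lambda>(r, y). loss r y) \<in> borel_measurable (MR \<Otimes>\<^sub>M MY)"
    and loss_range: "\<And>r y. 0 \<le> loss r y \<and> loss r y \<le> 1"
    and cmi_meas: "floo_CMI MW MR h n \<in> borel_measurable (PiM {..<n} (\<lambda>_. P))"
  shows "gen_gap MW P loss h (n - 1)
           \<le> (real n / real (n - 1)) / sqrt 2 *
             (\<integral>z. sqrt (floo_CMI MW MR h n z) \<partial>(PiM {..<n} (\<lambda>_. P)))"
proof -
  interpret W: prob_space MW by fact
  interpret Pp: prob_space P by fact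
  define PN where "PN = PiM {..<n} (\<lambda>_. P)"
  define PN1 where "PN1 = PiM {..<n-1} (\<lambda>_. P)"
  interpret PN: prob_space PN unfolding PN_def by (intro prob_space_PiM PP)
  interpret PN1: prob_space PN1 unfolding PN1_def by (intro prob_space_PiM PP)
  have n0: "n > 0" "n - 1 > 0" using n2 by auto
  have spP: "space P = space (MX \<Otimes>\<^sub>M MY)" by (rule sets_eq_imp_space_eq[OF sets_P])
  have fstm: "fst \<in> P \<rightarrow>\<^sub>M MX" by (subst measurable_cong_sets[OF sets_P refl]) simp
  have sndm: "snd \<in> P \<rightarrow>\<^sub>M MY" by (subst measurable_cong_sets[OF sets_P refl]) simp
  have hm: "(\<lambda>(w, z, x). h w z x) \<in> MW \<Otimes>\<^sub>M (PN1 \<Otimes>\<^sub>M MX) \<rightarrow>\<^sub>M MR"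
    using h_meas unfolding PN1_def .
  have lb: "\<bar>loss r y\<bar> \<le> 1" for r y using loss_range[of r y] by simp
  have delm: "(\<lambda>z. del_idx n u z) \<in> PN \<rightarrow>\<^sub>M PN1" if "u < n" for u
    unfolding del_eq PN_def PN1_def
    by (intro measurable_restrict measurable_component_singleton) (use that in \<open>auto simp: sig_def\<close>)
  have compm: "(\<lambda>z. z u) \<in> PN \<rightarrow>\<^sub>M P" if "u < n" for u
    unfolding PN_def by (intro measurable_component_singleton) (use that in auto)
  define c where "c = real n / real (n - 1)"
  define LL where "LL z v w u = loss (h w (del_idx n v z) (fst (z u))) (snd (z u))" for z v w u
  define Tz where "Tz z v = (\<integral>w. LL z v w v \<partial>MW)" for z v
  define Bz where "Bz z v = (\<integral>w. (\<Sum>u<n. LL z v w u) \<partial>MW)" for z v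
  define Ez where "Ez z v = (\<integral>w. emp_loss loss h (n-1) w (del_idx n v z) \<partial>MW)" for z v
  define Gz where "Gz z = (\<Sum>v<n. Tz z v - Ez z v) / n" for z
  define I where "I z = floo_CMI MW MR h n z" for z
  have emp_eq: "emp_loss loss h (n-1) w (del_idx n v z) = ((\<Sum>u<n. LL z v w u) - LL z v w v) / real (n - 1)"
    if "v < n" for z v w
  proof -
    have "(\<Sum>i<n-1. loss (h w (del_idx n v z) (fst (del_idx n v z i))) (snd (del_idx n v z i)))
        = (\<Sum>i<n-1. LL z v w (sig v i))"
      by (intro sum.cong refl) (auto simp: LL_def del_eq)
    also have "\<dots> = (\<Sum>u<n. LL z v w u) - LL z v w v" by (rule sum_sig[OF that])
    finally show ?thesis unfolding emp_loss_def by simp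
  qed
  have LLm: "(\<lambda>w. LL z v w u) \<in> borel_measurable MW" if "z \<in> space PN" "v < n" "u < n" for z v u
  proof -
    have zu: "z u \<in> space P" using that measurable_space[OF compm[of u]] by auto
    then have zu': "fst (z u) \<in> space MX" "snd (z u) \<in> space MY" unfolding spP space_pair_measure mem_Times_iff by auto
    have d: "del_idx n v z \<in> space PN1" using measurable_space[OF delm[OF that(2)] that(1)] .
    have A: "(\<lambda>w. h w (del_idx n v z) (fst (z u))) \<in> MW \<rightarrow>\<^sub>M MR"
      by (rule hcomp[OF hm measurable_ident_sets[OF refl] measurable_const[OF d] measurable_const[OF zu'(1)]])
    show ?thesis unfolding LL_def
      by (rule losscomp[OF loss_meas A measurable_const[OF zu'(2)]])
  qed
  have LLb: "\<bar>LL z v w u\<bar> \<le> 1" for z v w u unfolding LL_def by (rule lb)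
  have perz: "\<bar>Gz z\<bar> \<le> c / sqrt 2 * sqrt (I z) \<and> \<bar>I z\<bar> \<le> 1 + real n * real n" if z: "z \<in> space PN" for z
  proof -
    have zi: "z u \<in> space P" if "u < n" for u using z measurable_space[OF compm[OF that]] by auto
    have zi': "fst (z u) \<in> space MX" "snd (z u) \<in> space MY" if "u < n" for u
      using zi[OF that] unfolding spP space_pair_measure mem_Times_iff by auto
    have dsp: "del_idx n u z \<in> space PN1" if "u < n" for u using measurable_space[OF delm[OF that] z] .
    note pz = per_z[OF PW n0(1), where T="PiM {..<n} (\<lambda>_. MR)"
        and X="\<lambda>w u. \<lambda>i\<in>{..<n}. h w (del_idx n u z) (fst (z i))" and a="\<lambda>F u. loss (F u) (snd (z u))"]
    have pz2: "\<bar>(\<Sum>u<n. \<integral>w. loss ((\<lambda>i\<in>{..<n}. h w (del_idx n u z) (fst (z i))) u) (snd (z u)) \<partial>MW) / n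
        - (\<Sum>v<n. \<integral>w. (\<Sum>u<n. loss ((\<lambda>i\<in>{..<n}. h w (del_idx n v z) (fst (z i))) u) (snd (z u))) / n \<partial>MW) / n\<bar>
        \<le> sqrt (I z / 2) \<and> \<bar>I z\<bar> \<le> 1 + real n * real n"
      unfolding I_def floo_CMI_def
    proof (rule pz)
      fix u assume u: "u < n"
      show "(\<lambda>w. \<lambda>i\<in>{..<n}. h w (del_idx n u z) (fst (z i))) \<in> MW \<rightarrow>\<^sub>M PiM {..<n} (\<lambda>_. MR)"
      proof (rule measurable_restrict)
        fix i assume "i \<in> {..<n}"
        then have i: "i < n" by simp
        show "(\<lambda>w. h w (del_idx n u z) (fst (z i))) \<in> MW \<rightarrow>\<^sub>M MR"
          by (rule hcomp[OF hm measurable_ident_sets[OF refl] measurable_const[OF dsp[OF u]] measurable_const[OF zi'(1)[OF i]]])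
      qed
      have cm: "(\<lambda>F. F u) \<in> PiM {..<n} (\<lambda>_. MR) \<rightarrow>\<^sub>M MR"
        by (rule measurable_component_singleton) (use u in simp)
      show "(\<lambda>F. loss (F u) (snd (z u))) \<in> borel_measurable (PiM {..<n} (\<lambda>_. MR))"
        by (rule losscomp[OF loss_meas cm measurable_const[OF zi'(2)[OF u]]])
    qed (use loss_range in auto)
    have e1: "(\<Sum>u<n. \<integral>w. loss ((\<lambda>i\<in>{..<n}. h w (del_idx n u z) (fst (z i))) u) (snd (z u)) \<partial>MW) = (\<Sum>v<n. Tz z v)"
      by (intro sum.cong refl) (auto simp: Tz_def LL_def)
    have e2: "(\<Sum>v<n. \<integral>w. (\<Sum>u<n. loss ((\<lambda>i\<in>{..<n}. h w (del_idx n v z) (fst (z i))) u) (snd (z u))) / n \<partial>MW)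
        = (\<Sum>v<n. Bz z v / n)"
    proof (intro sum.cong refl)
      fix v assume "v \<in> {..<n}"
      have "(\<lambda>w. (\<Sum>u<n. loss ((\<lambda>i\<in>{..<n}. h w (del_idx n v z) (fst (z i))) u) (snd (z u))) / real n)
          = (\<lambda>w. (\<Sum>u<n. LL z v w u) / real n)"
        by (intro ext arg_cong2[where f="(/)"] sum.cong refl) (auto simp: LL_def)
      then show "(\<integral>w. (\<Sum>u<n. loss ((\<lambda>i\<in>{..<n}. h w (del_idx n v z) (fst (z i))) u) (snd (z u))) / real n \<partial>MW)
          = Bz z v / real n" by (simp add: Bz_def)
    qed
    have intLL: "integrable MW (\<lambda>w. LL z v w u)" if "v < n" "u < n" for v u
      by (rule bounded_integrable[OF W.finite_measure_axioms LLm[OF z that], where B=1]) (rule LLb)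
    have Ee: "Ez z v = (Bz z v - Tz z v) / real (n - 1)" if v: "v < n" for v
    proof -
      have "Ez z v = (\<integral>w. ((\<Sum>u<n. LL z v w u) - LL z v w v) / real (n - 1) \<partial>MW)"
        unfolding Ez_def by (rule Bochner_Integration.integral_cong[OF refl emp_eq[OF v]])
      also have "\<dots> = ((\<integral>w. (\<Sum>u<n. LL z v w u) \<partial>MW) - (\<integral>w. LL z v w v \<partial>MW)) / real (n - 1)"
      proof -
        have isum: "integrable MW (\<lambda>w. (\<Sum>u<n. LL z v w u))"
          by (rule Bochner_Integration.integrable_sum) (use intLL[OF v] in auto)
        show ?thesis
          by (simp only: integral_divide_zero Bochner_Integration.integral_diff[OF isum intLL[OF v v]])
      qed
      finally show ?thesis unfolding Bz_def Tz_def .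
    qed
    define ST where "ST = (\<Sum>v<n. Tz z v)"
    define SB where "SB = (\<Sum>v<n. Bz z v)"
    have G: "Gz z = (ST - (SB - ST) / real (n - 1)) / n"
    proof -
      have "(\<Sum>v<n. Tz z v - Ez z v) = (\<Sum>v<n. Tz z v - (Bz z v - Tz z v) / real (n - 1))"
        by (intro sum.cong refl) (simp add: Ee)
      also have "\<dots> = ST - (SB - ST) / real (n - 1)"
        unfolding ST_def SB_def using n0 by (simp add: sum_subtractf sum_divide_distrib[symmetric] of_nat_diff)
      finally show ?thesis unfolding Gz_def by simp
    qed
    have pz3: "\<bar>ST / n - (SB / n) / n\<bar> \<le> sqrt (I z / 2)" and Ib: "\<bar>I z\<bar> \<le> 1 + real n * real n"
      using pz2 unfolding e1 e2 ST_def SB_def by (auto simp: sum_divide_distrib[symmetric])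
    have m: "real (n - 1) = real n - 1" using n0 by (simp add: of_nat_diff)
    have "Gz z = c * (ST / n - (SB / n) / n)"
      unfolding G c_def m using n0 n2 by (simp add: field_simps)
    then have "\<bar>Gz z\<bar> = c * \<bar>ST / n - (SB / n) / n\<bar>" by (simp add: abs_mult c_def)
    also have "\<dots> \<le> c * sqrt (I z / 2)" by (rule mult_left_mono[OF pz3]) (simp add: c_def)
    also have "\<dots> = c / sqrt 2 * sqrt (I z)" by (simp add: real_sqrt_divide)
    finally show ?thesis using Ib by simp
  qed
  have hm': "(\<lambda>(w, z, x). h w z x) \<in> MW \<Otimes>\<^sub>M (PiM {..<n-1} (\<lambda>_. P) \<Otimes>\<^sub>M MX) \<rightarrow>\<^sub>M MR"
    by (rule h_meas)
  interpret WN: pair_prob_space MW PN1 ..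
  interpret WP: pair_prob_space MW P ..
  interpret NP: pair_prob_space PN1 P ..
  interpret PNW: pair_prob_space PN MW ..
  interpret QW: pair_prob_space "PN1 \<Otimes>\<^sub>M P" MW ..
  have empb: "\<bar>emp_loss loss h (n-1) w z'\<bar> \<le> 1" for w z'
  proof -
    have "(\<Sum>i<n-1. loss (h w z' (fst (z' i))) (snd (z' i))) \<le> (\<Sum>i<n-1. 1)"
      by (intro sum_mono) (use loss_range in auto)
    moreover have "0 \<le> (\<Sum>i<n-1. loss (h w z' (fst (z' i))) (snd (z' i)))"
      by (intro sum_nonneg) (use loss_range in auto)
    ultimately show ?thesis unfolding emp_loss_def using n0 by (simp add: abs_le_iff)
  qed
  have trueb: "\<bar>true_loss P loss h w z'\<bar> \<le> 1" for w z'
    unfolding true_loss_def by (rule abs_int_le[OF PP]) (rule lb)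
  have empm: "(\<lambda>s. emp_loss loss h (n-1) (fst s) (snd s)) \<in> borel_measurable (MW \<Otimes>\<^sub>M PN1)"
    unfolding PN1_def by (rule empm_gen[OF hm' loss_meas fstm sndm measurable_fst measurable_snd[unfolded PN1_def]])
  have truem: "(\<lambda>s. true_loss P loss h (fst s) (snd s)) \<in> borel_measurable (MW \<Otimes>\<^sub>M PN1)"
    by (rule truem_gen[OF PP hm loss_meas fstm sndm measurable_fst measurable_snd])
  have ie: "integrable (MW \<Otimes>\<^sub>M PN1) (\<lambda>s. emp_loss loss h (n-1) (fst s) (snd s))"
    by (rule bounded_integrable[OF WN.finite_measure_axioms empm, where B=1]) (rule empb)
  have it: "integrable (MW \<Otimes>\<^sub>M PN1) (\<lambda>s. true_loss P loss h (fst s) (snd s))"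
    by (rule bounded_integrable[OF WN.finite_measure_axioms truem, where B=1]) (rule trueb)
  have Tzm: "(\<lambda>z. Tz z v) \<in> borel_measurable PN" if v: "v < n" for v
  proof -
    have H: "(\<lambda>q. h (snd q) (del_idx n v (fst q)) (fst (fst q v))) \<in> PN \<Otimes>\<^sub>M MW \<rightarrow>\<^sub>M MR"
      by (rule hcomp[OF hm measurable_snd measurable_compose[OF measurable_fst delm[OF v]]
            measurable_compose[OF measurable_compose[OF measurable_fst compm[OF v]] fstm]])
    have L: "(\<lambda>q. loss (h (snd q) (del_idx n v (fst q)) (fst (fst q v))) (snd (fst q v))) \<in> borel_measurable (PN \<Otimes>\<^sub>M MW)"
      by (rule losscomp[OF loss_meas H measurable_compose[OF measurable_compose[OF measurable_fst compm[OF v]] sndm]])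
    show ?thesis unfolding Tz_def LL_def
      by (rule W.borel_measurable_lebesgue_integral) (use L in \<open>simp add: split_beta'\<close>)
  qed
  have Ezm: "(\<lambda>z. Ez z v) \<in> borel_measurable PN" if v: "v < n" for v
  proof -
    have L: "(\<lambda>q. emp_loss loss h (n-1) (snd q) (del_idx n v (fst q))) \<in> borel_measurable (PN \<Otimes>\<^sub>M MW)"
      by (rule empm_gen[OF hm' loss_meas fstm sndm measurable_snd measurable_compose[OF measurable_fst delm[OF v, unfolded PN1_def]]])
    show ?thesis unfolding Ez_def
      by (rule W.borel_measurable_lebesgue_integral) (use L in \<open>simp add: split_beta'\<close>)
  qed
  have Tzb: "\<bar>Tz z v\<bar> \<le> 1" for z v unfolding Tz_def by (rule abs_int_le[OF PW]) (rule LLb)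
  have Ezb: "\<bar>Ez z v\<bar> \<le> 1" for z v unfolding Ez_def by (rule abs_int_le[OF PW]) (rule empb)
  have Gzm: "Gz \<in> borel_measurable PN"
    unfolding Gz_def
    by (rule borel_measurable_divide, rule borel_measurable_sum[where f="\<lambda>v z. Tz z v - Ez z v"])
       (auto intro!: borel_measurable_diff Tzm Ezm)
  have Gzb: "\<bar>Gz z\<bar> \<le> 2" for z
  proof -
    have "\<bar>\<Sum>v<n. Tz z v - Ez z v\<bar> \<le> (\<Sum>v<n. \<bar>Tz z v - Ez z v\<bar>)" by (rule sum_abs)
    also have "\<dots> \<le> (\<Sum>v<n. 2)"
    proof (rule sum_mono)
      fix v show "\<bar>Tz z v - Ez z v\<bar> \<le> 2" using Tzb[of z v] Ezb[of z v] by (simp add: abs_le_iff)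
    qed
    finally have "\<bar>\<Sum>v<n. Tz z v - Ez z v\<bar> \<le> 2 * real n" by simp
    then show ?thesis unfolding Gz_def using n0 by (simp add: divide_le_eq)
  qed
  have gzm: "(\<lambda>z. (\<lambda>i\<in>{..<n-1}. z (sig v i), z v)) \<in> PN \<rightarrow>\<^sub>M PN1 \<Otimes>\<^sub>M P" if v: "v < n" for v
    unfolding PN_def PN1_def
  proof (intro measurable_Pair measurable_restrict measurable_component_singleton)
    show "sig v i \<in> {..<n}" if "i \<in> {..<n-1}" for i using that v by (auto simp: sig_def)
  qed (use v in auto)
  have ex: "distr PN (PN1 \<Otimes>\<^sub>M P) (\<lambda>z. (\<lambda>i\<in>{..<n-1}. z (sig v i), z v)) = PN1 \<Otimes>\<^sub>M P" if v: "v < n" for v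
    unfolding PN_def PN1_def by (rule exch[OF PP v])
  have TI: "(\<integral>z. Tz z v \<partial>PN) = (\<integral>s. true_loss P loss h (fst s) (snd s) \<partial>(MW \<Otimes>\<^sub>M PN1))" if v: "v < n" for v
  proof -
    define gz where "gz = (\<lambda>z::nat \<Rightarrow> 'x \<times> 'y. (\<lambda>i\<in>{..<n-1}. z (sig v i), z v))"
    define \<psi> where "\<psi> q = (\<integral>w. loss (h w (fst q) (fst (snd q))) (snd (snd q)) \<partial>MW)" for q
    have Hq: "(\<lambda>q. h (snd q) (fst (fst q)) (fst (snd (fst q)))) \<in> (PN1 \<Otimes>\<^sub>M P) \<Otimes>\<^sub>M MW \<rightarrow>\<^sub>M MR"
      by (rule hcomp[OF hm measurable_snd measurable_compose[OF measurable_fst measurable_fst]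
            measurable_compose[OF measurable_compose[OF measurable_fst measurable_snd] fstm]])
    have Lq: "(\<lambda>q. loss (h (snd q) (fst (fst q)) (fst (snd (fst q)))) (snd (snd (fst q)))) \<in> borel_measurable ((PN1 \<Otimes>\<^sub>M P) \<Otimes>\<^sub>M MW)"
      by (rule losscomp[OF loss_meas Hq measurable_compose[OF measurable_compose[OF measurable_fst measurable_snd] sndm]])
    have \<psi>m: "\<psi> \<in> borel_measurable (PN1 \<Otimes>\<^sub>M P)"
      unfolding \<psi>_def by (rule W.borel_measurable_lebesgue_integral) (use Lq in \<open>simp add: split_beta'\<close>)
    have \<psi>b: "\<bar>\<psi> q\<bar> \<le> 1" for q unfolding \<psi>_def by (rule abs_int_le[OF PW]) (rule lb)
    have eq: "Tz z v = \<psi> (gz z)" for z unfolding Tz_def LL_def \<psi>_def gz_def by (simp add: del_eq)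
    have "(\<integral>z. Tz z v \<partial>PN) = (\<integral>z. \<psi> (gz z) \<partial>PN)" by (simp add: eq)
    also have "\<dots> = (\<integral>q. \<psi> q \<partial>(distr PN (PN1 \<Otimes>\<^sub>M P) gz))"
      by (rule integral_distr[symmetric, OF gzm[OF v, folded gz_def] \<psi>m])
    also have "\<dots> = (\<integral>q. \<psi> q \<partial>(PN1 \<Otimes>\<^sub>M P))" unfolding gz_def ex[OF v] ..
    also have "\<dots> = (\<integral>z'. (\<integral>p. \<psi> (z', p) \<partial>P) \<partial>PN1)"
      by (rule NP.integral_fst'[symmetric], rule bounded_integrable[OF NP.finite_measure_axioms \<psi>m, where B=1]) (rule \<psi>b)
    also have "\<dots> = (\<integral>z'. (\<integral>w. true_loss P loss h w z' \<partial>MW) \<partial>PN1)"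
    proof (rule Bochner_Integration.integral_cong[OF refl])
      fix z' assume z': "z' \<in> space PN1"
      define f where "f w p = loss (h w z' (fst p)) (snd p)" for w p
      have Hf: "(\<lambda>q. h (fst q) z' (fst (snd q))) \<in> MW \<Otimes>\<^sub>M P \<rightarrow>\<^sub>M MR"
        by (rule hcomp[OF hm measurable_fst measurable_const[OF z'] measurable_compose[OF measurable_snd fstm]])
      have fm: "(\<lambda>q. f (fst q) (snd q)) \<in> borel_measurable (MW \<Otimes>\<^sub>M P)"
        unfolding f_def by (rule losscomp[OF loss_meas Hf measurable_compose[OF measurable_snd sndm]])
      have fi: "integrable (MW \<Otimes>\<^sub>M P) (case_prod f)"
        using bounded_integrable[OF WP.finite_measure_axioms fm, where B=1] lb
        by (simp add: split_beta' f_def)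
      have "(\<integral>p. \<psi> (z', p) \<partial>P) = (\<integral>p. (\<integral>w. f w p \<partial>MW) \<partial>P)" by (simp add: \<psi>_def f_def)
      also have "\<dots> = (\<integral>w. (\<integral>p. f w p \<partial>P) \<partial>MW)" by (rule WP.Fubini_integral[OF fi])
      also have "\<dots> = (\<integral>w. true_loss P loss h w z' \<partial>MW)" by (simp add: true_loss_def f_def)
      finally show "(\<integral>p. \<psi> (z', p) \<partial>P) = (\<integral>w. true_loss P loss h w z' \<partial>MW)" .
    qed
    also have "\<dots> = (\<integral>s. true_loss P loss h (fst s) (snd s) \<partial>(MW \<Otimes>\<^sub>M PN1))"
      using WN.integral_snd[of "\<lambda>w z'. true_loss P loss h w z'"] it by (simp add: split_beta')
    finally show ?thesis .
  qed
  have EI: "(\<integral>z. Ez z v \<partial>PN) = (\<integral>s. emp_loss loss h (n-1) (fst s) (snd s) \<partial>(MW \<Otimes>\<^sub>M PN1))" if v: "v < n" for v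
  proof -
    define gz where "gz = (\<lambda>z::nat \<Rightarrow> 'x \<times> 'y. (\<lambda>i\<in>{..<n-1}. z (sig v i), z v))"
    define \<psi> where "\<psi> q = (\<integral>w. emp_loss loss h (n-1) w (fst q) \<partial>MW)" for q :: "(nat \<Rightarrow> 'x \<times> 'y) \<times> ('x \<times> 'y)"
    have Lq: "(\<lambda>q. emp_loss loss h (n-1) (snd q) (fst (fst q))) \<in> borel_measurable ((PN1 \<Otimes>\<^sub>M P) \<Otimes>\<^sub>M MW)"
      unfolding PN1_def by (rule empm_gen[OF hm' loss_meas fstm sndm measurable_snd measurable_compose[OF measurable_fst measurable_fst]])
    have \<psi>m: "\<psi> \<in> borel_measurable (PN1 \<Otimes>\<^sub>M P)"
      unfolding \<psi>_def by (rule W.borel_measurable_lebesgue_integral) (use Lq in \<open>simp add: split_beta'\<close>)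
    have \<psi>b: "\<bar>\<psi> q\<bar> \<le> 1" for q unfolding \<psi>_def by (rule abs_int_le[OF PW]) (rule empb)
    have eq: "Ez z v = \<psi> (gz z)" for z unfolding Ez_def \<psi>_def gz_def by (simp add: del_eq)
    have "(\<integral>z. Ez z v \<partial>PN) = (\<integral>z. \<psi> (gz z) \<partial>PN)" by (simp add: eq)
    also have "\<dots> = (\<integral>q. \<psi> q \<partial>(distr PN (PN1 \<Otimes>\<^sub>M P) gz))"
      by (rule integral_distr[symmetric, OF gzm[OF v, folded gz_def] \<psi>m])
    also have "\<dots> = (\<integral>q. \<psi> q \<partial>(PN1 \<Otimes>\<^sub>M P))" unfolding gz_def ex[OF v] ..
    also have "\<dots> = (\<integral>z'. (\<integral>p. \<psi> (z', p) \<partial>P) \<partial>PN1)"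
      by (rule NP.integral_fst'[symmetric], rule bounded_integrable[OF NP.finite_measure_axioms \<psi>m, where B=1]) (rule \<psi>b)
    also have "\<dots> = (\<integral>z'. (\<integral>w. emp_loss loss h (n-1) w z' \<partial>MW) \<partial>PN1)"
      by (simp add: \<psi>_def Pp.prob_space)
    also have "\<dots> = (\<integral>s. emp_loss loss h (n-1) (fst s) (snd s) \<partial>(MW \<Otimes>\<^sub>M PN1))"
      using WN.integral_snd[of "\<lambda>w z'. emp_loss loss h (n-1) w z'"] ie by (simp add: split_beta')
    finally show ?thesis .
  qed
  have intG: "(\<integral>z. Gz z \<partial>PN) = (\<integral>s. true_loss P loss h (fst s) (snd s) \<partial>(MW \<Otimes>\<^sub>M PN1))
      - (\<integral>s. emp_loss loss h (n-1) (fst s) (snd s) \<partial>(MW \<Otimes>\<^sub>M PN1))"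
  proof -
    have iT: "integrable PN (\<lambda>z. Tz z v)" if "v < n" for v
      by (rule bounded_integrable[OF PN.finite_measure_axioms Tzm[OF that], where B=1]) (rule Tzb)
    have iE: "integrable PN (\<lambda>z. Ez z v)" if "v < n" for v
      by (rule bounded_integrable[OF PN.finite_measure_axioms Ezm[OF that], where B=1]) (rule Ezb)
    have "(\<integral>z. (\<Sum>v<n. Tz z v - Ez z v) \<partial>PN) = (\<Sum>v<n. \<integral>z. Tz z v - Ez z v \<partial>PN)"
      by (rule Bochner_Integration.integral_sum[where f="\<lambda>v z. Tz z v - Ez z v"]) (use iT iE in auto)
    also have "\<dots> = (\<Sum>v<n. (\<integral>s. true_loss P loss h (fst s) (snd s) \<partial>(MW \<Otimes>\<^sub>M PN1))
      - (\<integral>s. emp_loss loss h (n-1) (fst s) (snd s) \<partial>(MW \<Otimes>\<^sub>M PN1)))"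
    proof (rule sum.cong[OF refl])
      fix v assume "v \<in> {..<n}"
      then have v: "v < n" by simp
      show "(\<integral>z. Tz z v - Ez z v \<partial>PN) = (\<integral>s. true_loss P loss h (fst s) (snd s) \<partial>(MW \<Otimes>\<^sub>M PN1))
      - (\<integral>s. emp_loss loss h (n-1) (fst s) (snd s) \<partial>(MW \<Otimes>\<^sub>M PN1))"
        by (subst Bochner_Integration.integral_diff[OF iT[OF v] iE[OF v]]) (simp only: TI[OF v] EI[OF v])
    qed
    finally show ?thesis unfolding Gz_def using n0 by simp
  qed
  have gg: "gen_gap MW P loss h (n - 1) = \<bar>\<integral>z. Gz z \<partial>PN\<bar>"
  proof -
    have "gen_gap MW P loss h (n - 1) = \<bar>(\<integral>s. emp_loss loss h (n-1) (fst s) (snd s) - true_loss P loss h (fst s) (snd s) \<partial>(MW \<Otimes>\<^sub>M PN1))\<bar>"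
      unfolding gen_gap_def PN1_def by (simp add: split_beta')
    also have "\<dots> = \<bar>\<integral>z. Gz z \<partial>PN\<bar>"
      unfolding intG using ie it by simp
    finally show ?thesis .
  qed
  have Im: "(\<lambda>z. sqrt (I z)) \<in> borel_measurable PN"
    using measurable_compose[OF cmi_meas borel_measurable_sqrt] unfolding I_def PN_def by (simp add: comp_def)
  have iI: "integrable PN (\<lambda>z. c / sqrt 2 * sqrt (I z))"
  proof (intro integrable_mult_right bounded_integrable[OF PN.finite_measure_axioms Im])
    fix z assume "z \<in> space PN"
    then have "\<bar>I z\<bar> \<le> 1 + real n * real n" using perz by blast
    moreover have "\<bar>sqrt (I z)\<bar> = sqrt \<bar>I z\<bar>"
      by (cases "I z \<ge> 0") (auto simp: real_sqrt_minus[symmetric])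
    ultimately show "\<bar>sqrt (I z)\<bar> \<le> sqrt (1 + real n * real n)" by simp
  qed
  have iG: "integrable PN Gz" by (rule bounded_integrable[OF PN.finite_measure_axioms Gzm, where B=2]) (simp add: Gzb)
  have "\<bar>\<integral>z. Gz z \<partial>PN\<bar> \<le> (\<integral>z. \<bar>Gz z\<bar> \<partial>PN)"
    using Bochner_Integration.integral_norm_bound[of PN Gz] by simp
  also have "\<dots> \<le> (\<integral>z. c / sqrt 2 * sqrt (I z) \<partial>PN)"
  proof (rule integral_mono)
    fix z assume "z \<in> space PN" then show "\<bar>Gz z\<bar> \<le> c / sqrt 2 * sqrt (I z)" using perz by blast
  qed (use iG iI in auto)
  also have "\<dots> = c / sqrt 2 * (\<integral>z. sqrt (I z) \<partial>PN)" by simp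
  finally show ?thesis unfolding gg c_def I_def PN_def .
qed


end
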